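(* Let $p\ge5$ be prime and $f$ a modular form of weight $k$ on $\mathrm{SL}_2(\mathbb{Z})$ with integer Fourier coefficients. Let $n$ be the unique integer with $0\le np^2-k+1<p^2$. Then $D^{np^2-k+1}f$ is congruent to a modular form mod $p^2$; that is, the image of $D^{np^2-k+1}f\in\mathbb{Z}_{(p)}[P,Q,R]$ in $(\mathbb{Z}/p^2\mathbb{Z})[P,Q,R]$ lies in $(\mathbb{Z}/p^2\mathbb{Z})[Q,R]$.
   Context: $\mathbb{Z}_{(p)}$ is the localization of $\mathbb{Z}$ at $p$. $P=E_2,Q=E_4,R=E_6$ are the normalized Eisenstein series; quasimodular forms are identified with their unique polynomial expressions in $P,Q,R$, so $f\in\mathbb{Z}_{(p)}[Q,R]$. $D=q\frac{d}{dq}$ acts on $\mathbb{Z}_{(p)}[P,Q,R]$ as the derivation with $DP=\frac{P^2-Q}{12}$, $DQ=\frac{PQ-R}{3}$, $DR=\frac{PR-Q^2}{2}$. *)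

theory Defs
  imports Complex_Main "HOL-Computational_Algebra.Formal_Power_Series"
begin

text \<open>Polynomials in the three variables P, Q, R with rational coefficients are represented
  by their coefficient functions: g (a,b,c) is the coefficient of P^a Q^b R^c.
  (Only finitely supported functions are considered polynomials.)\<close>

type_synonym pqr = "nat \<times> nat \<times> nat \<Rightarrow> rat"

definition is_poly :: "pqr \<Rightarrow> bool" where
  "is_poly g \<longleftrightarrow> finite {m. g m \<noteq> 0}"

text \<open>The derivation D with D P = (P^2 - Q)/12, D Q = (P Q - R)/3, D R = (P R - Q^2)/2,
  extended by the Leibniz rule.  Applied to the monomial P^a Q^b R^c it gives
  (a/12 + b/3 + c/2) P^(a+1) Q^b R^c - a/12 P^(a-1) Q^(b+1) R^c
  - b/3 P^a Q^(b-1) R^(c+1) - c/2 P^a Q^(b+2) R^(c-1);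
  collecting the coefficient of P^a Q^b R^c yields the formula below.\<close>

definition Dop :: "pqr \<Rightarrow> pqr" where
  "Dop g = (\<lambda>(a,b,c).
      (if a \<ge> 1 then (of_nat (a-1) / 12 + of_nat b / 3 + of_nat c / 2) * g (a-1, b, c) else 0)
    - (if b \<ge> 1 then of_nat (a+1) / 12 * g (a+1, b-1, c) else 0)
    - (if c \<ge> 1 then of_nat (b+1) / 3 * g (a, b+1, c-1) else 0)
    - (if b \<ge> 2 then of_nat (c+1) / 2 * g (a, b-2, c+1) else 0))"

text \<open>Membership in Z_(p) (denominator in lowest terms not divisible by p).\<close>

definition p_integral :: "nat \<Rightarrow> rat \<Rightarrow> bool" where
  "p_integral p x \<longleftrightarrow> \<not> (int p dvd snd (quotient_of x))"

text \<open>Divisor sums and the q-expansions of Q = E4 and R = E6.\<close>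

definition sigma :: "nat \<Rightarrow> nat \<Rightarrow> nat" where
  "sigma j n = (\<Sum>d | d dvd n. d ^ j)"

definition E4 :: "rat fps" where
  "E4 = Abs_fps (\<lambda>n. if n = 0 then 1 else 240 * of_nat (sigma 3 n))"

definition E6 :: "rat fps" where
  "E6 = Abs_fps (\<lambda>n. if n = 0 then 1 else - 504 * of_nat (sigma 5 n))"

definition qexp_QR :: "pqr \<Rightarrow> rat fps" where
  "qexp_QR g = (\<Sum>(b,c) \<in> {(b,c). g (0,b,c) \<noteq> 0}. fps_const (g (0,b,c)) * E4 ^ b * E6 ^ c)"

definition modular_form :: "nat \<Rightarrow> pqr \<Rightarrow> bool" where
  "modular_form k g \<longleftrightarrow> is_poly g \<and>
     (\<forall>a b c. g (a,b,c) \<noteq> 0 \<longrightarrow> a = 0 \<and> 4*b + 6*c = k)"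

end

theory Submission
  imports Defs
begin

unbundle fps_syntax



lemma pint_iff:
  assumes "prime p"
  shows "p_integral p x \<longleftrightarrow> (\<exists>a b. \<not> int p dvd b \<and> x = of_int a / of_int b)"
proof
  assume "p_integral p x"
  then show "\<exists>a b. \<not> int p dvd b \<and> x = of_int a / of_int b"
    unfolding p_integral_def
    by (metis prod.collapse quotient_of_div)
next
  assume "\<exists>a b. \<not> int p dvd b \<and> x = of_int a / of_int b"
  then obtain a b where nb: "\<not> int p dvd b" and x: "x = of_int a / of_int b" by blast
  obtain u v where q: "quotient_of x = (u,v)" by (cases "quotient_of x")
  have v0: "v > 0" using quotient_of_denom_pos[OF q] .
  have cop: "coprime u v" using quotient_of_coprime[OF q] .
  have xuv: "x = of_int u / of_int v" using quotient_of_div[OF q] .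
  have b0: "b \<noteq> 0" using nb by auto
  have "of_int a * of_int v = (of_int u * of_int b :: rat)"
    using x xuv b0 v0 by (simp add: field_simps)
  hence eq: "a * v = u * b" by (metis of_int_eq_iff of_int_mult)
  show "p_integral p x"
    unfolding p_integral_def q
  proof (simp, rule notI)
    assume pv: "int p dvd v"
    have pp: "prime (int p)" using assms by simp
    have "\<not> int p dvd u"
    proof
      assume "int p dvd u"
      with pv cop have "is_unit (int p)" using coprime_common_divisor by blast
      with pp show False using not_prime_unit by blast
    qed
    moreover have "int p dvd u * b" using pv eq by (metis dvd_mult2 mult.commute)
    ultimately have "int p dvd b" using pp prime_dvd_mult_iff by blast
    with nb show False by simp
  qed
qed

lemma pint_int: "prime p \<Longrightarrow> p_integral p (of_int a)"
proof -
  assume "prime p"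
  hence "p > 1" using prime_gt_1_nat by blast
  hence "\<not> int p dvd 1" by simp
  thus ?thesis unfolding p_integral_def by (simp add: quotient_of_int)
qed

context fixes p :: nat assumes pp: "prime p" begin

lemma pnd: "\<not> int p dvd b \<Longrightarrow> \<not> int p dvd d \<Longrightarrow> \<not> int p dvd (b*d)"
  using pp by (simp add: prime_dvd_mult_iff)

lemma pint_add: "p_integral p x \<Longrightarrow> p_integral p y \<Longrightarrow> p_integral p (x + y)"
proof -
  assume "p_integral p x" "p_integral p y"
  then obtain a b c d where b: "\<not> int p dvd b" and x: "x = of_int a / of_int b"
     and d: "\<not> int p dvd d" and y: "y = of_int c / of_int d" using pint_iff[OF pp] by metis
  have b0: "b \<noteq> 0" and d0: "d \<noteq> 0" using b d by auto
  have "x + y = of_int (a*d + c*b) / of_int (b*d)" using b0 d0 x y by (simp add: field_simps)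
  thus ?thesis using pint_iff[OF pp] pnd[OF b d] by blast
qed

lemma pint_mult: "p_integral p x \<Longrightarrow> p_integral p y \<Longrightarrow> p_integral p (x * y)"
proof -
  assume "p_integral p x" "p_integral p y"
  then obtain a b c d where b: "\<not> int p dvd b" and x: "x = of_int a / of_int b"
     and d: "\<not> int p dvd d" and y: "y = of_int c / of_int d" using pint_iff[OF pp] by metis
  have "x * y = of_int (a*c) / of_int (b*d)" using x y by simp
  thus ?thesis using pint_iff[OF pp] pnd[OF b d] by blast
qed

lemma pint_div: "p_integral p x \<Longrightarrow> \<not> int p dvd d \<Longrightarrow> p_integral p (x / of_int d)"
proof -
  assume "p_integral p x" and d: "\<not> int p dvd d"
  then obtain a b where b: "\<not> int p dvd b" and x: "x = of_int a / of_int b"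
     using pint_iff[OF pp] by metis
  have "x / of_int d = of_int a / of_int (b*d)" using x by simp
  thus ?thesis using pint_iff[OF pp] pnd[OF b d] by blast
qed

lemma pint_of_int: "p_integral p (of_int a)" using pint_int[OF pp] .

lemma pint_of_nat: "p_integral p (of_nat a)" using pint_int[OF pp, of "int a"] by simp

lemma pint_Ints: "x \<in> \<int> \<Longrightarrow> p_integral p x" using pint_of_int by (auto elim: Ints_cases)

lemma pint_0: "p_integral p 0" using pint_of_nat[of 0] by simp

lemma pint_minus: "p_integral p x \<Longrightarrow> p_integral p (- x)"
  using pint_mult[of "-1" x] pint_of_int[of "-1"] by simp

lemma pint_diff: "p_integral p x \<Longrightarrow> p_integral p y \<Longrightarrow> p_integral p (x - y)"
  using pint_add[OF _ pint_minus] by simp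

lemma pint_sum: "(\<And>i. i \<in> A \<Longrightarrow> p_integral p (f i)) \<Longrightarrow> p_integral p (sum f A)"
  by (induction A rule: infinite_finite_induct) (auto simp: pint_0 pint_add)

end




lemma choose_key: "Suc i * (j choose Suc i) = (j - i) * (j choose i)"
  using binomial_absorption[of i j] binomial_absorb_comp[of j i] by simp

definition cc :: "nat \<Rightarrow> nat \<Rightarrow> nat \<Rightarrow> rat" where
  "cc k j i = of_nat ((j choose i) * pochhammer (k + j - i) i) / 12 ^ i"

lemma cc0[simp]: "cc k j 0 = 1" by (simp add: cc_def)

lemma cc_gt: "j < i \<Longrightarrow> cc k j i = 0" by (simp add: cc_def)

lemma L1:
  assumes "1 \<le> i" "i \<le> Suc j"
  shows "cc k (Suc j) i = of_nat (k + 2*j + 1 - i) / 12 * cc k j (i - 1) + cc k j i"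
proof (cases "i = Suc j")
  case True
  have "pochhammer k (Suc j) = (k + j) * pochhammer k j" by (simp add: pochhammer_rec')
  then show ?thesis using True by (simp add: cc_def cc_gt field_simps)
next
  case False
  then obtain i' where i: "i = Suc i'" and ij: "i' < j" using assms by (cases i) auto
  define a where "a = k + j - i"
  define X where "X = pochhammer (a + 1) i'"
  have e1: "k + Suc j - i = a + 1" "k + j - i' = a + 1" using ij i by (auto simp: a_def)
  have p1: "pochhammer (a+1) i = (k + j) * X" using ij i
    by (simp add: pochhammer_rec' X_def a_def)
  have p2: "pochhammer a i = a * X" using i by (simp add: pochhammer_rec X_def)
  have ck: "Suc i' * (j choose Suc i') = (j - i') * (j choose i')" by (rule choose_key)
  have "(Suc j choose i) * (k + j) = (k + 2*j + 1 - i) * (j choose i') + (j choose i) * a"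
  proof -
    have "(Suc j choose i) = (j choose i') + (j choose i)" using i by simp
    moreover have "int ((j choose i) * Suc i') = int ((j - i') * (j choose i'))" using ck i
      by (simp add: mult.commute)
    moreover have "int (k + 2*j + 1 - i) = int k + 2*int j - int i'" using i ij by simp
    moreover have "int a * int (j choose i) = (int k + int j - int i' - 1) * int (j choose i)" using i ij by (simp add: a_def)
    ultimately have "int ((Suc j choose i) * (k + j)) = int ((k + 2*j + 1 - i) * (j choose i') + (j choose i) * a)"
      unfolding of_nat_mult of_nat_add using i ij by (simp add: algebra_simps of_nat_diff)
    thus ?thesis by (simp only: of_nat_eq_iff)
  qed
  hence "(Suc j choose i) * ((k + j) * X) = (k + 2*j + 1 - i) * ((j choose i') * X) + (j choose i) * (a * X)"
    by (metis (no_types, lifting) add_mult_distrib mult.assoc)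
  hence E: "of_nat ((Suc j choose i) * ((k + j) * X)) = (of_nat (k + 2*j + 1 - i) * of_nat ((j choose i') * X) + of_nat ((j choose i) * (a * X)) :: rat)"
    by (metis of_nat_add of_nat_mult)
  have c1: "cc k (Suc j) i = of_nat ((Suc j choose i) * ((k + j) * X)) / 12^i"
    unfolding cc_def e1 p1 ..
  have c2: "cc k j (i - 1) = of_nat ((j choose i') * X) / 12^i'"
    unfolding cc_def using i e1 X_def by simp
  have c3: "cc k j i = of_nat ((j choose i) * (a * X)) / 12^i"
    unfolding cc_def a_def[symmetric] p2 ..
  show ?thesis unfolding c1 c2 c3 E using i by (simp add: field_simps)
qed

lemma L2:
  assumes "i \<le> j"
  shows "of_nat (Suc i) / 12 * cc k j (Suc i) = cc k j i * (of_nat (j - i) * of_nat (k + (j - i) - 1) / 144)"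
proof (cases "i = j")
  case True then show ?thesis by (simp add: cc_gt)
next
  case False
  hence ij: "i < j" using assms by simp
  define b where "b = k + j - Suc i"
  define Y where "Y = pochhammer (b + 1) i"
  have e1: "k + j - i = b + 1" "k + (j - i) - 1 = b" using ij by (auto simp: b_def)
  have p: "pochhammer b (Suc i) = b * Y" by (simp add: pochhammer_rec Y_def)
  have ck: "Suc i * (j choose Suc i) = (j - i) * (j choose i)" by (rule choose_key)
  have c1: "cc k j (Suc i) = of_nat ((j choose Suc i) * (b * Y)) / 12 ^ Suc i"
    unfolding cc_def b_def[symmetric] p ..
  have c2: "cc k j i = of_nat ((j choose i) * Y) / 12 ^ i"
    unfolding cc_def e1 Y_def ..
  have E: "(of_nat (Suc i) * of_nat ((j choose Suc i) * (b * Y)) :: rat) = of_nat ((j choose i) * Y) * (of_nat (j - i) * of_nat b)"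
  proof -
    have "Suc i * ((j choose Suc i) * (b * Y)) = ((j choose i) * Y) * ((j - i) * b)"
    proof -
      have "Suc i * ((j choose Suc i) * (b * Y)) = (Suc i * (j choose Suc i)) * (b * Y)" by (simp only: mult.assoc)
      also have "\<dots> = ((j - i) * (j choose i)) * (b * Y)" by (simp only: ck)
      also have "\<dots> = ((j choose i) * Y) * ((j - i) * b)" by (simp only: mult_ac)
      finally show ?thesis .
    qed
    thus ?thesis by (simp only: of_nat_mult[symmetric])
  qed
  have "of_nat (Suc i) / 12 * cc k j (Suc i) = (of_nat (Suc i) * of_nat ((j choose Suc i) * (b * Y))) / 12 ^ (i+2)"
    unfolding c1 by (simp add: field_simps)
  also have "\<dots> = of_nat ((j choose i) * Y) * (of_nat (j - i) * of_nat b) / 12 ^ (i+2)" unfolding E ..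
  also have "\<dots> = cc k j i * (of_nat (j - i) * of_nat (k + (j - i) - 1) / 144)"
    unfolding c2 e1 by (simp add: field_simps)
  finally show ?thesis .
qed




definition Sop :: "(nat \<times> nat \<Rightarrow> rat) \<Rightarrow> nat \<times> nat \<Rightarrow> rat" where
  "Sop h = (\<lambda>(b,c). - (if c \<ge> 1 then of_nat (b+1) / 3 * h (b+1, c-1) else 0)
                    - (if b \<ge> 2 then of_nat (c+1) / 2 * h (b-2, c+1) else 0))"

definition Qs :: "(nat \<times> nat \<Rightarrow> rat) \<Rightarrow> nat \<times> nat \<Rightarrow> rat" where
  "Qs h = (\<lambda>(b,c). if b \<ge> 1 then h (b-1, c) else 0)"

fun T :: "nat \<Rightarrow> pqr \<Rightarrow> nat \<Rightarrow> nat \<times> nat \<Rightarrow> rat" where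
  "T k f 0 = (\<lambda>(b,c). f (0,b,c))"
| "T k f (Suc 0) = Sop (T k f 0)"
| "T k f (Suc (Suc r)) = (\<lambda>x. Sop (T k f (Suc r)) x - of_nat (Suc r) * of_nat (k + r) / 144 * Qs (T k f r) x)"

lemma T_Suc: "T k f (Suc r) x = Sop (T k f r) x - of_nat r * of_nat (k + r - 1) / 144 * Qs (T k f (r - 1)) x"
  by (cases r) auto

lemma Sop_supp: "Sop h (b,c) \<noteq> 0 \<Longrightarrow> (c \<ge> 1 \<and> h (b+1,c-1) \<noteq> 0) \<or> (b \<ge> 2 \<and> h (b-2,c+1) \<noteq> 0)"
  by (rule ccontr) (auto simp: Sop_def split: if_splits)

lemma T_weight:
  assumes hf: "\<forall>a b c. f (a,b,c) \<noteq> 0 \<longrightarrow> a = 0 \<and> 4*b+6*c = k"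
  shows "T k f r (b,c) \<noteq> 0 \<Longrightarrow> 4*b+6*c = k + 2*r"
proof (induction r arbitrary: b c rule: less_induct)
  case (less r)
  show ?case
  proof (cases r)
    case 0
    then show ?thesis using hf less.prems by auto
  next
    case (Suc r1)
    show ?thesis
    proof (cases r1)
      case 0
      then have "Sop (T k f 0) (b,c) \<noteq> 0" using Suc less.prems by simp
      from Sop_supp[OF this] show ?thesis using Suc 0 less.IH[of 0 "b+1" "c-1"] less.IH[of 0 "b-2" "c+1"]
        by auto
    next
      case (Suc r2)
      note r = \<open>r = Suc r1\<close> Suc
      show ?thesis
      proof (cases "Sop (T k f (Suc r2)) (b,c) = 0")
        case True
        then have "Qs (T k f r2) (b,c) \<noteq> 0" using less.prems r by auto
        then show ?thesis using less.IH[of r2 "b-1" c] r by (auto simp: Qs_def split: if_splits)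
      next
        case False
        from Sop_supp[OF False] show ?thesis using less.IH[of "Suc r2" "b+1" "c-1"] less.IH[of "Suc r2" "b-2" "c+1"] r
          by auto
      qed
    qed
  qed
qed

lemma T_weight_factor:
  assumes hf: "\<forall>a b c. f (a,b,c) \<noteq> 0 \<longrightarrow> a = 0 \<and> 4*b+6*c = k"
  shows "(of_nat x / 12 + of_nat b / 3 + of_nat c / 2) * T k f r (b,c) = of_nat (x + k + 2*r) / 12 * T k f r (b,c)"
proof (cases "T k f r (b,c) = 0")
  case False
  then have "4*b+6*c = k + 2*r" using T_weight[OF hf] by blast
  hence "(of_nat (4*b+6*c) :: rat) = of_nat (k + 2*r)" by simp
  hence "(4 * of_nat b + 6 * of_nat c :: rat) = of_nat k + 2 * of_nat r" by simp
  then show ?thesis by (simp add: field_simps)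
qed simp

lemma Dop_formula:
  assumes hf: "\<forall>a b c. f (a,b,c) \<noteq> 0 \<longrightarrow> a = 0 \<and> 4*b+6*c = k"
  shows "(Dop ^^ j) f (i,b,c) = cc k j i * T k f (j - i) (b,c)"
proof (induction j arbitrary: i b c)
  case 0
  show ?case
  proof (cases i)
    case 0 then show ?thesis by simp
  next
    case (Suc i') then show ?thesis using hf by (auto simp: cc_def)
  qed
next
  case (Suc j)
  define F where "F = (Dop ^^ j) f"
  have IH: "\<And>i b c. F (i,b,c) = cc k j i * T k f (j - i) (b,c)" using Suc.IH F_def by simp
  have D: "(Dop ^^ Suc j) f (i,b,c) =
      (if i \<ge> 1 then (of_nat (i-1) / 12 + of_nat b / 3 + of_nat c / 2) * F (i-1, b, c) else 0)
    - (if b \<ge> 1 then of_nat (i+1) / 12 * F (i+1, b-1, c) else 0)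
    - (if c \<ge> 1 then of_nat (b+1) / 3 * F (i, b+1, c-1) else 0)
    - (if b \<ge> 2 then of_nat (c+1) / 2 * F (i, b-2, c+1) else 0)"
    by (simp add: F_def Dop_def)
  have t34: "- (if c \<ge> 1 then of_nat (b+1) / 3 * F (i, b+1, c-1) else 0)
    - (if b \<ge> 2 then of_nat (c+1) / 2 * F (i, b-2, c+1) else 0) = cc k j i * Sop (T k f (j - i)) (b,c)"
    by (simp add: IH Sop_def algebra_simps)
  have t2: "(if b \<ge> 1 then of_nat (i+1) / 12 * F (i+1, b-1, c) else 0)
      = of_nat (Suc i) / 12 * cc k j (Suc i) * Qs (T k f (j - i - 1)) (b,c)"
    by (simp add: IH Qs_def)
  have D2: "(Dop ^^ Suc j) f (i,b,c) =
      (if i \<ge> 1 then (of_nat (i-1) / 12 + of_nat b / 3 + of_nat c / 2) * F (i-1, b, c) else 0)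
    - of_nat (Suc i) / 12 * cc k j (Suc i) * Qs (T k f (j - i - 1)) (b,c)
    + cc k j i * Sop (T k f (j - i)) (b,c)"
    using D t34 t2 by linarith
  show ?case
  proof (cases "i = 0")
    case True
    have "(Dop ^^ Suc j) f (i,b,c) = Sop (T k f j) (b,c) - of_nat 1 / 12 * cc k j 1 * Qs (T k f (j - 1)) (b,c)"
      unfolding D2 using True by simp
    also have "\<dots> = T k f (Suc j) (b,c)" using L2[of 0 j k] by (simp add: T_Suc)
    finally show ?thesis using True by simp
  next
    case False
    show ?thesis
    proof (cases "i \<le> Suc j")
      case True
      have t1: "(if i \<ge> 1 then (of_nat (i-1) / 12 + of_nat b / 3 + of_nat c / 2) * F (i-1, b, c) else 0)
          = of_nat (k + 2*j + 1 - i) / 12 * cc k j (i - 1) * T k f (Suc j - i) (b,c)"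
      proof -
        have e: "j - (i - 1) = Suc j - i" using False by simp
        have "(of_nat (i-1) / 12 + of_nat b / 3 + of_nat c / 2) * T k f (Suc j - i) (b,c)
            = of_nat (i - 1 + k + 2*(Suc j - i)) / 12 * T k f (Suc j - i) (b,c)"
          by (rule T_weight_factor[OF hf])
        moreover have n: "i - 1 + k + 2*(Suc j - i) = k + 2*j + 1 - i" using True False by simp
        ultimately have W: "(of_nat (i-1) / 12 + of_nat b / 3 + of_nat c / 2) * T k f (Suc j - i) (b,c)
            = of_nat (k + 2*j + 1 - i) / 12 * T k f (Suc j - i) (b,c)" by (simp only: n)
        have "(if i \<ge> 1 then (of_nat (i-1) / 12 + of_nat b / 3 + of_nat c / 2) * F (i-1, b, c) else 0)
           = cc k j (i - 1) * ((of_nat (i-1) / 12 + of_nat b / 3 + of_nat c / 2) * T k f (Suc j - i) (b,c))"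
          using False by (simp add: IH e)
        also have "\<dots> = cc k j (i - 1) * (of_nat (k + 2*j + 1 - i) / 12 * T k f (Suc j - i) (b,c))"
          unfolding W ..
        finally show ?thesis by simp
      qed
      have L: "cc k (Suc j) i = of_nat (k + 2*j + 1 - i) / 12 * cc k j (i - 1) + cc k j i"
        using L1[of i j k] True False by simp
      show ?thesis
      proof (cases "i = Suc j")
        case True
        then show ?thesis unfolding D2 t1 L using cc_gt[of j i k] cc_gt[of j "Suc i" k]
          by simp
      next
        case False2: False
        hence ij: "i \<le> j" using True by simp
        have e: "Suc j - i = Suc (j - i)" "j - i - 1 = j - i - 1" using ij by auto
        have "(Dop ^^ Suc j) f (i,b,c) = of_nat (k + 2*j + 1 - i) / 12 * cc k j (i - 1) * T k f (Suc j - i) (b,c)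
           - of_nat (Suc i) / 12 * cc k j (Suc i) * Qs (T k f (j - i - 1)) (b,c)
           + cc k j i * Sop (T k f (j - i)) (b,c)"
          unfolding D2 t1 by simp
        also have "\<dots> = of_nat (k + 2*j + 1 - i) / 12 * cc k j (i - 1) * T k f (Suc j - i) (b,c)
           + cc k j i * T k f (Suc j - i) (b,c)"
        proof -
          have Tr: "T k f (Suc j - i) (b,c) = Sop (T k f (j-i)) (b,c) - of_nat (j - i) * of_nat (k + (j - i) - 1) / 144 * Qs (T k f (j - i - 1)) (b,c)"
            unfolding e(1) T_Suc ..
          have A: "of_nat (Suc i) / 12 * cc k j (Suc i) * Qs (T k f (j - i - 1)) (b,c) = cc k j i * (of_nat (j - i) * of_nat (k + (j - i) - 1) / 144) * Qs (T k f (j - i - 1)) (b,c)"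
            unfolding L2[OF ij, of k] ..
          show ?thesis unfolding A Tr by (simp add: algebra_simps)
        qed
        also have "\<dots> = cc k (Suc j) i * T k f (Suc j - i) (b,c)" unfolding L by (simp add: algebra_simps)
        finally show ?thesis .
      qed
    next
      case False2: False
      then show ?thesis unfolding D2 IH
        using cc_gt[of j i k] cc_gt[of j "Suc i" k] cc_gt[of j "i - 1" k] cc_gt[of "Suc j" i k] False
        by simp
    qed
  qed
qed




context fixes p :: nat assumes pp: "prime p" and p5: "5 \<le> p" begin

lemma small_nd: "0 < d \<Longrightarrow> d < 5 \<Longrightarrow> \<not> int p dvd int d"
proof
  assume "0 < d" "d < 5" "int p dvd int d"
  hence "p dvd d" by simp
  hence "p \<le> d" using \<open>0 < d\<close> by (simp add: dvd_imp_le)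
  thus False using p5 \<open>d < 5\<close> by simp
qed

lemma nd12: "\<not> int p dvd 12 ^ i"
proof
  assume "int p dvd 12 ^ i"
  hence "int p dvd 12" using pp prime_dvd_power by (metis prime_nat_int_transfer)
  hence "int p dvd 2 * 6" by simp
  moreover have "prime (int p)" using pp by simp
  ultimately have "int p dvd 2 \<or> int p dvd 6" using prime_dvd_mult_iff by blast
  moreover have "int p dvd 6 \<Longrightarrow> int p dvd 2 \<or> int p dvd 3"
    using pp prime_dvd_mult_iff[of "int p" 2 3] by auto
  ultimately have "int p dvd int 2 \<or> int p dvd int 3" by auto
  thus False using small_nd[of 2] small_nd[of 3] by auto
qed

lemma pint_div_small: "p_integral p x \<Longrightarrow> 0 < d \<Longrightarrow> d < 5 \<Longrightarrow> p_integral p (x / of_nat d)"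
  using pint_div[OF pp _ small_nd[of d]] by (metis of_int_of_nat_eq)

lemma pint_div144: "p_integral p x \<Longrightarrow> p_integral p (x / 144)"
  using pint_div[OF pp _ nd12[of 2]] by simp

lemma pint_Sop: "(\<And>x. p_integral p (h x)) \<Longrightarrow> p_integral p (Sop h y)"
proof -
  assume H: "\<And>x. p_integral p (h x)"
  obtain b c where y: "y = (b,c)" by (cases y)
  have 1: "p_integral p (of_nat (b+1) / of_nat 3 * h (b+1, c-1))"
    by (rule pint_mult[OF pp pint_div_small[OF pint_of_nat[OF pp]] H]) auto
  have 2: "p_integral p (of_nat (c+1) / of_nat 2 * h (b-2, c+1))"
    by (rule pint_mult[OF pp pint_div_small[OF pint_of_nat[OF pp]] H]) auto
  show ?thesis unfolding y Sop_def using 1 2 pint_0[OF pp]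
    by (auto intro!: pint_diff[OF pp] pint_minus[OF pp])
qed

lemma pint_Qs: "(\<And>x. p_integral p (h x)) \<Longrightarrow> p_integral p (Qs h y)"
  by (cases y) (auto simp: Qs_def pint_0[OF pp])

lemma T_pint:
  assumes fi: "\<And>b c. p_integral p (f (0,b,c))"
  shows "p_integral p (T k f r x)"
proof (induction r arbitrary: x rule: less_induct)
  case (less r)
  show ?case
  proof (cases r)
    case 0 then show ?thesis using fi by (cases x) auto
  next
    case (Suc r1)
    have a: "p_integral p (Sop (T k f r1) x)" using less.IH Suc by (intro pint_Sop) auto
    have c: "p_integral p (of_nat r1 * of_nat (k + r1 - 1) / 144)"
      using pint_div144[OF pint_mult[OF pp pint_of_nat[OF pp] pint_of_nat[OF pp]]] by simp
    have b: "p_integral p (Qs (T k f (r1 - 1)) x)" using less.IH Suc by (intro pint_Qs) auto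
    show ?thesis unfolding Suc T_Suc by (intro pint_diff[OF pp] a pint_mult[OF pp] b c)
  qed
qed

lemma final_part:
  assumes hf: "\<forall>a b c. f (a,b,c) \<noteq> 0 \<longrightarrow> a = 0 \<and> 4*b+6*c = k"
    and fi: "\<And>b c. p_integral p (f (0,b,c))"
    and N: "int k + int j - 1 = n * int p ^ 2"
  shows "p_integral p ((Dop ^^ j) f (i,b,c)) \<and> (i > 0 \<longrightarrow> p_integral p ((Dop ^^ j) f (i,b,c) / of_nat (p^2)))"
proof -
  have F: "(Dop ^^ j) f (i,b,c) = cc k j i * T k f (j - i) (b,c)" by (rule Dop_formula[OF hf])
  have Tp: "p_integral p (T k f (j - i) (b,c))" by (rule T_pint) (rule fi)
  have ccp: "p_integral p (cc k j i)" unfolding cc_def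
    using pint_div[OF pp pint_of_nat[OF pp, of "(j choose i) * pochhammer (k + j - i) i"] nd12[of i]] by simp
  have 1: "p_integral p ((Dop ^^ j) f (i,b,c))" unfolding F by (rule pint_mult[OF pp ccp Tp])
  have 2: "p_integral p ((Dop ^^ j) f (i,b,c) / of_nat (p^2))" if ip: "i > 0"
  proof (cases "i \<le> j")
    case False then show ?thesis unfolding F using cc_gt[of j i k] pint_0[OF pp] by simp
  next
    case True
    then obtain i' where i: "i = Suc i'" using ip by (cases i) auto
    have jpos: "j \<ge> 1" using True ip by simp
    have "int (k + j - 1) = n * int p ^ 2" using N jpos by simp
    hence "int (p^2) dvd int (k + j - 1)" by simp
    then obtain t where t: "k + j - 1 = p^2 * t" by (metis dvd_def of_nat_dvd_iff)
    have "k + j - i + i' = p^2 * t" using i True t by simp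
    hence poch: "pochhammer (k + j - i) i = (p^2 * t) * pochhammer (k + j - i) i'"
      unfolding i pochhammer_rec' by simp
    have p0: "(of_nat (p^2) :: rat) \<noteq> 0" using pp by (simp add: prime_gt_0_nat)
    have "cc k j i / of_nat (p^2) = of_nat ((j choose i) * (t * pochhammer (k + j - i) i')) / of_int (12 ^ i)"
      unfolding cc_def poch using p0 by (simp add: field_simps)
    hence "p_integral p (cc k j i / of_nat (p^2))"
      using pint_div[OF pp pint_of_nat[OF pp, of "(j choose i) * (t * pochhammer (k + j - i) i')"] nd12[of i]] by simp
    moreover have "(Dop ^^ j) f (i,b,c) / of_nat (p^2) = (cc k j i / of_nat (p^2)) * T k f (j - i) (b,c)"
      unfolding F by simp
    ultimately show ?thesis using pint_mult[OF pp _ Tp] by metis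
  qed
  show ?thesis using 1 2 by blast
qed

end





definition isint :: "rat fps \<Rightarrow> bool" where "isint X \<longleftrightarrow> (\<forall>n. X $ n \<in> \<int>)"

lemma isint_mult: "isint X \<Longrightarrow> isint Y \<Longrightarrow> isint (X * Y)"
  unfolding isint_def fps_mult_nth by (auto intro!: Ints_sum Ints_mult)

lemma isint_power: "isint X \<Longrightarrow> isint (X ^ n)"
  by (induction n) (auto simp: isint_mult, auto simp: isint_def)

lemma isint_diff: "isint X \<Longrightarrow> isint Y \<Longrightarrow> isint (X - Y)"
  unfolding isint_def by (auto intro!: Ints_diff)

lemma isint_E4: "isint E4" unfolding isint_def E4_def by (simp add: Ints_mult)
lemma isint_E6: "isint E6" unfolding isint_def E6_def by (simp add: Ints_mult)

lemma sigma1: "sigma j (Suc 0) = 1" unfolding sigma_def by simp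

lemma E4_0: "E4 $ 0 = 1" and E4_1: "E4 $ 1 = 240" and E6_0: "E6 $ 0 = 1" and E6_1: "E6 $ 1 = -504"
  by (simp_all add: E4_def E6_def sigma1)

lemma pow_nth1: "X $ 0 = (1::rat) \<Longrightarrow> (X ^ n) $ 1 = of_nat n * X $ 1"
proof (induction n)
  case 0 then show ?case by simp
next
  case (Suc n)
  have "(X ^ Suc n) $ 1 = (X * X ^ n) $ 1" by simp
  also have "\<dots> = X $ 0 * (X ^ n) $ 1 + X $ 1 * (X ^ n) $ 0"
    unfolding fps_mult_nth by (simp add: atLeast0AtMost)
  also have "\<dots> = of_nat (Suc n) * X $ 1" using Suc by (simp add: fps_power_zeroth algebra_simps)
  finally show ?case .
qed

definition AA :: "rat fps" where "AA = E4 ^ 3"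
definition BB :: "rat fps" where "BB = E6 ^ 2"
definition DL :: "rat fps" where "DL = AA - BB"
definition D2 :: "rat fps" where "D2 = Abs_fps (\<lambda>n. DL $ Suc n)"

lemma AA0: "AA $ 0 = 1" by (simp add: AA_def fps_power_zeroth E4_0)
lemma BB0: "BB $ 0 = 1" by (simp add: BB_def fps_power_zeroth E6_0)
lemma DL0: "DL $ 0 = 0" by (simp add: DL_def AA0 BB0)
lemma DL1: "DL $ 1 = 1728"
proof -
  have a: "(E4^3) $ 1 = 3 * 240" using pow_nth1[of E4 3] E4_0 E4_1 by simp
  have b: "(E6^2) $ 1 = 2 * (-504)" using pow_nth1[of E6 2] E6_0 E6_1 by simp
  show ?thesis unfolding DL_def AA_def BB_def fps_sub_nth a b by simp
qed
lemma D20: "D2 $ 0 = 1728" using DL1 by (simp add: D2_def)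
lemma DL_X: "DL = fps_X * D2"
  by (rule fps_ext) (simp add: D2_def DL0)
lemma isint_AA: "isint AA" by (simp add: AA_def isint_power isint_E4)
lemma isint_BB: "isint BB" by (simp add: BB_def isint_power isint_E6)
lemma isint_DL: "isint DL" by (simp add: DL_def isint_diff isint_AA isint_BB)
lemma isint_D2: "isint D2" using isint_DL by (simp add: isint_def D2_def)

lemma KEY:
  assumes "y \<le> m"
  shows "U * AA^(m-y) * BB^y = (\<Sum>s\<le>m. of_nat (y choose s) * (-1)^s * (U * AA^(m-s) * DL^s))"
proof -
  have bb: "BB = - DL + AA" by (simp add: DL_def)
  have "BB^y = (\<Sum>s\<le>y. of_nat (y choose s) * (- DL)^s * AA^(y-s))"
    unfolding bb by (rule binomial_ring)
  hence "U * AA^(m-y) * BB^y = (\<Sum>s\<le>y. U * AA^(m-y) * (of_nat (y choose s) * (- DL)^s * AA^(y-s)))"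
    by (simp only: sum_distrib_left)
  also have "\<dots> = (\<Sum>s\<le>y. of_nat (y choose s) * (-1)^s * (U * AA^(m-s) * DL^s))"
  proof (rule sum.cong[OF refl])
    fix s assume "s \<in> {..y}"
    hence "m - s = (m - y) + (y - s)" using assms by auto
    hence "AA^(m-s) = AA^(m-y) * AA^(y-s)" by (simp add: power_add)
    moreover have "(- DL)^s = (-1)^s * DL^s" by (rule power_minus)
    ultimately show "U * AA^(m-y) * (of_nat (y choose s) * (- DL)^s * AA^(y-s)) = of_nat (y choose s) * (-1)^s * (U * AA^(m-s) * DL^s)"
      by (simp only: mult_ac)
  qed
  also have "\<dots> = (\<Sum>s\<le>m. of_nat (y choose s) * (-1)^s * (U * AA^(m-s) * DL^s))"
    by (rule sum.mono_neutral_left) (use assms in auto)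
  finally show ?thesis .
qed

lemma const_lemma: "fps_const (of_nat n * (-1)^s) = (of_nat n * (-1)^s :: rat fps)"
proof -
  have m1: "fps_const (-1::rat) = -1" by (simp add: fps_eq_iff)
  have "fps_const (of_nat n * (-1)^s) = fps_const (of_nat n) * fps_const (-1) ^ s"
    by (simp only: fps_const_mult fps_const_power)
  also have "\<dots> = (of_nat n * (-1)^s :: rat fps)"
    by (simp only: fps_of_nat m1)
  finally show ?thesis .
qed

context fixes p :: nat assumes pp: "prime p" and p5: "5 \<le> p" begin

lemma triang:
  fixes U :: "rat fps" and h :: "nat \<Rightarrow> rat" and m :: nat
  assumes Ui: "isint U" and U0: "U $ 0 = 1"
    and G: "\<And>t. p_integral p ((\<Sum>y\<le>m. fps_const (h y) * (U * AA^(m-y) * BB^y)) $ t)"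
  shows "\<forall>y\<le>m. p_integral p (h y)"
proof -
  define V where "V s = U * AA^(m-s) * DL^s" for s
  define W where "W s = U * AA^(m-s) * D2^s" for s
  define d where "d s = (\<Sum>y\<le>m. h y * (of_nat (y choose s) * (-1)^s))" for s
  have VW: "V s = fps_X^s * W s" for s by (simp add: V_def W_def DL_X power_mult_distrib mult_ac)
  have Vnth: "V s $ t = (if t < s then 0 else W s $ (t - s))" for s t unfolding VW fps_X_power_mult_nth ..
  have Wi: "isint (W s)" for s unfolding W_def by (intro isint_mult isint_power Ui isint_AA isint_D2)
  have W0: "W s $ 0 = 1728^s" for s by (simp add: W_def fps_power_zeroth U0 AA0 D20)
  have Gt: "(\<Sum>y\<le>m. fps_const (h y) * (U * AA^(m-y) * BB^y)) $ t = (\<Sum>s\<le>m. d s * V s $ t)" for t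
  proof -
    have "(\<Sum>y\<le>m. fps_const (h y) * (U * AA^(m-y) * BB^y)) $ t
        = (\<Sum>y\<le>m. h y * (\<Sum>s\<le>m. (of_nat (y choose s) * (-1)^s) * V s $ t))"
      unfolding fps_sum_nth fps_mult_left_const_nth
    proof (rule sum.cong[OF refl])
      fix y assume "y \<in> {..m}"
      hence "U * AA^(m-y) * BB^y = (\<Sum>s\<le>m. fps_const (of_nat (y choose s) * (-1)^s) * V s)"
        unfolding const_lemma V_def by (intro KEY) simp
      thus "h y * (U * AA^(m-y) * BB^y) $ t = h y * (\<Sum>s\<le>m. (of_nat (y choose s) * (-1)^s) * V s $ t)"
        by (simp only: fps_sum_nth fps_mult_left_const_nth)
    qed
    also have "\<dots> = (\<Sum>y\<le>m. \<Sum>s\<le>m. h y * (of_nat (y choose s) * (-1)^s) * V s $ t)"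
      by (simp add: sum_distrib_left mult.assoc)
    also have "\<dots> = (\<Sum>s\<le>m. \<Sum>y\<le>m. h y * (of_nat (y choose s) * (-1)^s) * V s $ t)"
      by (rule sum.swap)
    also have "\<dots> = (\<Sum>s\<le>m. d s * V s $ t)"
      by (simp add: d_def sum_distrib_right)
    finally show ?thesis .
  qed
  have dint: "\<forall>t. t \<le> m \<longrightarrow> p_integral p (d t)"
  proof (intro allI)
    fix t show "t \<le> m \<longrightarrow> p_integral p (d t)"
    proof (induction t rule: less_induct)
      case (less t)
      show ?case
      proof
        assume tm: "t \<le> m"
        have "(\<Sum>s\<le>m. d s * V s $ t) = (\<Sum>s\<le>t. d s * V s $ t)"
          by (rule sum.mono_neutral_right) (use tm in \<open>auto simp: Vnth\<close>)
        also have "\<dots> = (\<Sum>s<t. d s * V s $ t) + d t * 1728^t"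
          by (simp add: lessThan_Suc_atMost[symmetric] Vnth W0)
        finally have eq: "d t * 1728^t = (\<Sum>y\<le>m. fps_const (h y) * (U * AA^(m-y) * BB^y)) $ t - (\<Sum>s<t. d s * V s $ t)"
          using Gt by simp
        have "p_integral p (\<Sum>s<t. d s * V s $ t)"
        proof (rule pint_sum[OF pp])
          fix s assume "s \<in> {..<t}"
          hence "p_integral p (d s)" using less.IH tm by auto
          moreover have "p_integral p (V s $ t)"
            using Wi unfolding Vnth isint_def by (auto intro: pint_Ints[OF pp] pint_0[OF pp])
          ultimately show "p_integral p (d s * V s $ t)" by (rule pint_mult[OF pp])
        qed
        hence "p_integral p (d t * 1728^t)" unfolding eq by (intro pint_diff[OF pp] G)
        hence "p_integral p (d t * 1728^t / of_int (12^(3*t)))" by (rule pint_div[OF pp _ nd12[OF pp p5]])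
        moreover have "(of_int (12^(3*t)) :: rat) = 1728^t" by (simp add: power_mult)
        ultimately show "p_integral p (d t)" by simp
      qed
    qed
  qed
  have hform: "h s = (-1)^s * d s - (\<Sum>y\<in>{Suc s..m}. h y * of_nat (y choose s))" if sm: "s \<le> m" for s
  proof -
    have "d s = (-1)^s * (\<Sum>y\<le>m. h y * of_nat (y choose s))"
      by (simp add: d_def sum_distrib_left mult_ac)
    also have "(\<Sum>y\<le>m. h y * of_nat (y choose s)) = (\<Sum>y\<in>{s..m}. h y * of_nat (y choose s))"
      by (rule sum.mono_neutral_right) auto
    also have "\<dots> = h s + (\<Sum>y\<in>{Suc s..m}. h y * of_nat (y choose s))"
      using sm by (simp add: Icc_eq_insert_lb_nat)
    finally have "d s = (-1)^s * (h s + (\<Sum>y\<in>{Suc s..m}. h y * of_nat (y choose s)))" .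
    hence "(-1)^s * d s = ((-1)^s * (-1)^s) * (h s + (\<Sum>y\<in>{Suc s..m}. h y * of_nat (y choose s)))"
      by (simp add: mult.assoc)
    also have "((-1::rat)^s * (-1)^s) = 1" by (simp add: power_add[symmetric])
    finally show ?thesis by simp
  qed
  have "\<forall>y\<in>{0..m}. p_integral p (h y)"
  proof (rule inc_induct[of 0 "Suc m"])
    show "\<forall>y\<in>{Suc m..m}. p_integral p (h y)" by simp
  next
    fix n assume nm: "n < Suc m" and IH: "\<forall>y\<in>{Suc n..m}. p_integral p (h y)"
    have "p_integral p (h n)"
      unfolding hform[of n, OF _] using nm
      apply (subst hform)
       apply simp
      apply (intro pint_diff[OF pp] pint_mult[OF pp] pint_sum[OF pp])
      using dint IH nm by (auto intro: pint_of_nat[OF pp] pint_of_int[of p "(-1)^n", simplified, OF pp])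
    thus "\<forall>y\<in>{n..m}. p_integral p (h y)" using IH by (metis atLeastAtMost_iff le_antisym not_less_eq_eq)
  qed simp
  thus ?thesis by auto
qed

lemma wt_param:
  fixes b c b' c' :: nat
  assumes "4*b'+6*c' = 4*b+6*c"
  shows "b' = b mod 3 + 3*((b div 3 + c div 2) - c' div 2) \<and> c' = c mod 2 + 2*(c' div 2) \<and> c' div 2 \<le> b div 3 + c div 2"
proof -
  have e1: "2*b'+3*c' = 2*b+3*c" using assms by simp
  have m2: "c' mod 2 = c mod 2" using e1 by presburger
  have m3: "b' mod 3 = b mod 3" using e1 by presburger
  define q' where "q' = b' div 3"
  define r' where "r' = c' div 2"
  define a where "a = b mod 3"
  define e where "e = c mod 2"
  define q where "q = b div 3"
  define r where "r = c div 2"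
  have d: "b' = 3*q' + a" "c' = 2*r' + e" "b = 3*q + a" "c = 2*r+e"
    unfolding q'_def r'_def q_def r_def a_def e_def using m2 m3 by (metis div_mult_mod_eq mult.commute add.commute)+
  have "q' + r' = q + r" using e1 d by linarith
  hence "b' = a + 3*((q + r) - r') \<and> c' = e + 2*r' \<and> r' \<le> q + r" using d by auto
  thus ?thesis unfolding q'_def r'_def q_def r_def a_def e_def .
qed

lemma coeff_pint:
  assumes mf: "modular_form k f" and qi: "\<forall>j. fps_nth (qexp_QR f) j \<in> \<int>"
  shows "p_integral p (f (0,b,c))"
proof (cases "f (0,b,c) = 0")
  case True then show ?thesis using pint_0[OF pp] by simp
next
  case False
  have hf: "\<forall>a b c. f (a,b,c) \<noteq> 0 \<longrightarrow> a = 0 \<and> 4*b+6*c = k" using mf by (simp add: modular_form_def)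
  hence wk: "4*b+6*c = k" using False by blast
  define a where "a = b mod 3"
  define e where "e = c mod 2"
  define m where "m = b div 3 + c div 2"
  define \<phi> where "\<phi> y = (a + 3*(m - y), e + 2*y)" for y
  define h where "h y = f (0, a + 3*(m - y), e + 2*y)" for y
  define S where "S = {(b,c). f (0,b,c) \<noteq> 0}"
  define g where "g = (\<lambda>(b,c). fps_const (f (0,b,c)) * E4 ^ b * E6 ^ c)"
  define U where "U = E4^a * E6^e"
  have Sphi: "S \<subseteq> \<phi> ` {..m}"
  proof
    fix x assume "x \<in> S"
    obtain b' c' where x: "x = (b',c')" by (cases x)
    hence nz: "f (0,b',c') \<noteq> 0" using \<open>x \<in> S\<close> by (simp add: S_def)
    hence "4*b'+6*c' = 4*b+6*c" using hf wk by metis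
    from wt_param[OF this] have "x = \<phi> (c' div 2)" "c' div 2 \<le> m"
      unfolding x \<phi>_def a_def e_def m_def by auto
    thus "x \<in> \<phi> ` {..m}" by auto
  qed
  have inj: "inj_on \<phi> {..m}" unfolding inj_on_def \<phi>_def by auto
  have "qexp_QR f = sum g S" unfolding qexp_QR_def g_def S_def ..
  also have "\<dots> = sum g (\<phi> ` {..m})"
    by (rule sum.mono_neutral_left) (use Sphi in \<open>auto simp: S_def g_def\<close>)
  also have "\<dots> = (\<Sum>y\<le>m. g (\<phi> y))" using sum.reindex[OF inj, of g] by simp
  also have "\<dots> = (\<Sum>y\<le>m. fps_const (h y) * (U * AA^(m-y) * BB^y))"
  proof (rule sum.cong[OF refl])
    fix y
    have "E4 ^ (a + 3*(m-y)) * E6 ^ (e + 2*y) = U * AA^(m-y) * BB^y"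
      unfolding U_def AA_def BB_def power_add power_mult by (simp only: mult_ac)
    thus "g (\<phi> y) = fps_const (h y) * (U * AA^(m-y) * BB^y)"
      unfolding g_def \<phi>_def h_def by (simp add: mult.assoc)
  qed
  finally have Q: "qexp_QR f = (\<Sum>y\<le>m. fps_const (h y) * (U * AA^(m-y) * BB^y))" .
  have Ui: "isint U" unfolding U_def by (intro isint_mult isint_power isint_E4 isint_E6)
  have U0: "U $ 0 = 1" by (simp add: U_def fps_power_zeroth E4_0 E6_0)
  have "\<forall>y\<le>m. p_integral p (h y)"
    by (rule triang[OF Ui U0]) (use qi Q pint_Ints[OF pp] in metis)
  moreover have "f (0,b,c) = h (c div 2)" "c div 2 \<le> m"
    unfolding h_def a_def e_def m_def by auto
  ultimately show ?thesis by simp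
qed

end



theorem proposition3p9:
  fixes p k :: nat and n :: int and f :: pqr
  assumes "prime p" and "p \<ge> 5"
    and "modular_form k f"
    and "\<forall>j. fps_nth (qexp_QR f) j \<in> \<int>"
    and "0 \<le> n * int p ^ 2 - int k + 1" and "n * int p ^ 2 - int k + 1 < int p ^ 2"
  shows "\<forall>a b c.
           p_integral p (((Dop ^^ nat (n * int p ^ 2 - int k + 1)) f) (a,b,c)) \<and>
           (a > 0 \<longrightarrow> p_integral p (((Dop ^^ nat (n * int p ^ 2 - int k + 1)) f) (a,b,c) / of_nat (p^2)))"
proof (intro allI)
  fix a b c
  define j where "j = nat (n * int p ^ 2 - int k + 1)"
  have N: "int k + int j - 1 = n * int p ^ 2" using assms(5) unfolding j_def by simp
  have hf: "\<forall>a b c. f (a,b,c) \<noteq> 0 \<longrightarrow> a = 0 \<and> 4*b+6*c = k"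
    using assms(3) by (simp add: modular_form_def)
  have fi: "\<And>b c. p_integral p (f (0,b,c))"
    using coeff_pint[OF assms(1) assms(2) assms(3) assms(4)] .
  show "p_integral p (((Dop ^^ nat (n * int p ^ 2 - int k + 1)) f) (a,b,c)) \<and>
           (a > 0 \<longrightarrow> p_integral p (((Dop ^^ nat (n * int p ^ 2 - int k + 1)) f) (a,b,c) / of_nat (p^2)))"
    using final_part[OF assms(1) assms(2) hf fi N] unfolding j_def .
qed

end
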